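(* Let $x_{00},x_{10},x_{11},x_{01}\in\mathbb{RP}^3$ be the vertices of a planar quadrilateral with Laplace points $y^1$ (intersection of lines $x_{00}x_{10}$ and $x_{01}x_{11}$) and $y^2$ (intersection of lines $x_{00}x_{01}$ and $x_{10}x_{11}$). Let $p_0,p_1,q_0,q_1:[0,1]\to\mathbb{RP}^3$ be curves with $p_j(i)=q_i(j)=x_{ij}$ for $i,j\in\{0,1\}$, such that $p_0$ and $p_1$ are in perspective with respect to $y^2$ (i.e. $p_0(u),p_1(u),y^2$ are collinear for every $u$) and $q_0$ and $q_1$ are in perspective with respect to $y^1$ (i.e. $q_0(v),q_1(v),y^1$ are collinear for every $v$). Then there exists a unique projective translation surface patch $f:[0,1]^2\to\mathbb{RP}^3$ adapted to the quadrilateral such that $f(u,j)=p_j(u)$ for all $u\in[0,1]$, $j\in\{0,1\}$, and $f(i,v)=q_i(v)$ for all $v\in[0,1]$, $i\in\{0,1\}$.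
   Context: A parametrized surface patch $f:[0,1]^2\to\mathbb{RP}^3$ is a projective translation surface if there exist curves $\mathbf{p},\mathbf{q}:[0,1]\to\mathbb{R}^4$ with $f(u,v)=[\mathbf{p}(u)+\mathbf{q}(v)]$. Such a patch is adapted to a planar quadrilateral $x_{00},x_{10},x_{11},x_{01}$ if $f(i,j)=x_{ij}$ for $i,j\in\{0,1\}$. All data are assumed in general position. *)

theory Defs
  imports "HOL-Analysis.Analysis"
begin

typedef rp3 = "{L :: (real^4) set. \<exists>v. v \<noteq> 0 \<and> L = span {v}}"
  morphisms Rep_rp3 Abs_rp3
  by (rule exI[of _ "span {axis 1 1}"]) (simp, rule exI[of _ "axis 1 1"], simp add: axis_eq_0_iff)

definition pt :: "real^4 \<Rightarrow> rp3" where
  "pt v = Abs_rp3 (span {v})"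

definition proj_collinear :: "rp3 \<Rightarrow> rp3 \<Rightarrow> rp3 \<Rightarrow> bool" where
  "proj_collinear a b c \<longleftrightarrow> dim (Rep_rp3 a \<union> Rep_rp3 b \<union> Rep_rp3 c) \<le> 2"

definition proj_coplanar :: "rp3 \<Rightarrow> rp3 \<Rightarrow> rp3 \<Rightarrow> rp3 \<Rightarrow> bool" where
  "proj_coplanar a b c d \<longleftrightarrow>
     dim (Rep_rp3 a \<union> Rep_rp3 b \<union> Rep_rp3 c \<union> Rep_rp3 d) \<le> 3"

text \<open>Point z lies on the line joining a and b (for a = b this means z = a).\<close>
definition on_line :: "rp3 \<Rightarrow> rp3 \<Rightarrow> rp3 \<Rightarrow> bool" where
  "on_line z a b \<longleftrightarrow> Rep_rp3 z \<subseteq> span (Rep_rp3 a \<union> Rep_rp3 b)"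

definition proj_translation_patch :: "(real \<Rightarrow> real \<Rightarrow> rp3) \<Rightarrow> bool" where
  "proj_translation_patch f \<longleftrightarrow>
     (\<exists>p q :: real \<Rightarrow> real^4. \<forall>u\<in>{0..1}. \<forall>v\<in>{0..1}.
        p u + q v \<noteq> 0 \<and> f u v = pt (p u + q v))"

definition adapted ::
  "(real \<Rightarrow> real \<Rightarrow> rp3) \<Rightarrow> rp3 \<Rightarrow> rp3 \<Rightarrow> rp3 \<Rightarrow> rp3 \<Rightarrow> bool" where
  "adapted f x00 x10 x11 x01 \<longleftrightarrow>
     f 0 0 = x00 \<and> f 1 0 = x10 \<and> f 1 1 = x11 \<and> f 0 1 = x01"

end

theory Submission
  imports Defs
begin

definition indep3 :: "real^4 \<Rightarrow> real^4 \<Rightarrow> real^4 \<Rightarrow> bool" where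
  "indep3 a b c \<longleftrightarrow> (\<forall>x y z. x *\<^sub>R a + y *\<^sub>R b + z *\<^sub>R c = 0 \<longrightarrow> x = 0 \<and> y = 0 \<and> z = 0)"

lemma Rep_pt: "v \<noteq> 0 \<Longrightarrow> Rep_rp3 (pt v) = span {v}"
  unfolding pt_def by (rule Abs_rp3_inverse) auto

lemma rp3_lift: "\<exists>v. v \<noteq> 0 \<and> x = pt v"
proof -
  obtain v where "v \<noteq> 0" "Rep_rp3 x = span {v}" using Rep_rp3[of x] by auto
  then have "x = Abs_rp3 (span {v})" by (metis Rep_rp3_inverse)
  then show ?thesis unfolding pt_def using \<open>v \<noteq> 0\<close> by blast
qed

lemma span_sub: "A \<subseteq> span B \<Longrightarrow> span A \<subseteq> span B"
proof -
  assume "A \<subseteq> span B"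
  then have "span A \<subseteq> span (span B)" by (rule span_mono)
  then show ?thesis by (simp only: span_span)
qed

lemma pt_scale: assumes "c \<noteq> 0" shows "pt (c *\<^sub>R v) = pt v"
proof -
  have "span {c *\<^sub>R v} = span {v}"
  proof
    show "span {c *\<^sub>R v} \<subseteq> span {v}" by (rule span_sub) (simp add: span_base span_scale)
    have "v = (1/c) *\<^sub>R (c *\<^sub>R v)" using assms by simp
    then show "span {v} \<subseteq> span {c *\<^sub>R v}"
    proof (intro span_sub)
      have "(1/c) *\<^sub>R (c *\<^sub>R v) \<in> span {c *\<^sub>R v}" by (intro span_scale span_base) simp
      then show "{v} \<subseteq> span {c *\<^sub>R v}" using \<open>v = (1/c) *\<^sub>R (c *\<^sub>R v)\<close> by simp
    qed
  qed
  then show ?thesis unfolding pt_def by simp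
qed

lemma pt_eq: assumes "v \<noteq> 0" "w \<noteq> 0" shows "pt v = pt w \<longleftrightarrow> (\<exists>c. v = c *\<^sub>R w)"
proof
  assume "pt v = pt w"
  then have "Rep_rp3 (pt v) = Rep_rp3 (pt w)" by simp
  then have "span {v} = span {w}" using Rep_pt[OF assms(1)] Rep_pt[OF assms(2)] by simp
  moreover have "v \<in> span {v}" by (simp add: span_base)
  ultimately have "v \<in> span {w}" by simp
  then show "\<exists>c. v = c *\<^sub>R w" by (auto simp: span_singleton)
next
  assume "\<exists>c. v = c *\<^sub>R w"
  then obtain c where c: "v = c *\<^sub>R w" by auto
  with assms have "c \<noteq> 0" by auto
  then show "pt v = pt w" using c by (simp add: pt_scale)
qed

lemma span_UnU: "span (span A \<union> span B) = span (A \<union> B)"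
proof
  show "span (span A \<union> span B) \<subseteq> span (A \<union> B)"
    by (rule span_sub) (intro Un_least span_mono Un_upper1 Un_upper2)
  show "span (A \<union> B) \<subseteq> span (span A \<union> span B)"
    by (rule span_mono) (rule Un_mono[OF span_superset span_superset])
qed

lemma span_three: "span (span {a} \<union> span {b} \<union> span {c}) = span {a,b,c}"
proof
  show "span (span {a} \<union> span {b} \<union> span {c}) \<subseteq> span {a,b,c}"
    by (rule span_sub) (intro Un_least span_mono; simp)
  show "span {a,b,c} \<subseteq> span (span {a} \<union> span {b} \<union> span {c})"
    by (rule span_mono) (auto intro: span_base)
qed

lemma span_two: "span (span {a} \<union> span {b}) = span {a,b}"
proof
  show "span (span {a} \<union> span {b}) \<subseteq> span {a,b}"
    by (rule span_sub) (intro Un_least span_mono; simp)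
  show "span {a,b} \<subseteq> span (span {a} \<union> span {b})"
    by (rule span_mono) (auto intro: span_base)
qed

lemma in_span2: "z \<in> span {a,b} \<longleftrightarrow> (\<exists>s t. z = s *\<^sub>R a + t *\<^sub>R b)"
proof
  assume "z \<in> span {a,b}"
  then obtain s where "z - s *\<^sub>R a \<in> span {b}" by (auto simp: span_breakdown_eq)
  then obtain t where h: "z - s *\<^sub>R a = t *\<^sub>R b" by (auto simp: span_singleton)
  have "z = s *\<^sub>R a + t *\<^sub>R b" unfolding h[symmetric] by simp
  then show "\<exists>s t. z = s *\<^sub>R a + t *\<^sub>R b" by blast
next
  assume "\<exists>s t. z = s *\<^sub>R a + t *\<^sub>R b"
  then obtain s t where h: "z = s *\<^sub>R a + t *\<^sub>R b" by blast
  have "a \<in> span {a,b}" "b \<in> span {a,b}" by (auto intro: span_base)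
  then show "z \<in> span {a,b}" unfolding h by (intro span_add span_scale)
qed

lemma span_single_sub: "span {z} \<subseteq> span T \<longleftrightarrow> z \<in> span T"
proof
  assume "span {z} \<subseteq> span T"
  moreover have "z \<in> span {z}" by (auto intro: span_base)
  ultimately show "z \<in> span T" by blast
next
  assume "z \<in> span T"
  then show "span {z} \<subseteq> span T" by (intro span_sub) simp
qed

lemma solve2: assumes z: "(z::real) \<noteq> 0" and h: "z*c + x*a + y*b = 0" shows "c = (-x/z)*a + (-y/z)*b"
proof -
  have e: "z*c = -x*a - y*b" using h by linarith
  have "c = (z*c)/z" using z by simp
  also have "\<dots> = (-x*a - y*b)/z" using e by simp
  also have "\<dots> = (-x/z)*a + (-y/z)*b" using z by (simp add: field_simps)
  finally show ?thesis .
qed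

lemma solve1: assumes z: "(z::real) \<noteq> 0" and h: "z*c + x*a = 0" shows "c = (-x/z)*a"
  using solve2[of z c x a 0 0] assms by simp

lemma vecI: "(\<And>i. x$i = y$i) \<Longrightarrow> x = (y::real^4)"
  by (simp add: vec_eq_iff)

lemma comp: "x = (y::real^4) \<Longrightarrow> x$i = y$i" by simp

lemma solve_vec: assumes h: "x *\<^sub>R a + y *\<^sub>R b + z *\<^sub>R c = (0::real^4)" and z: "z \<noteq> 0"
  shows "c = (-x/z) *\<^sub>R a + (-y/z) *\<^sub>R b"
proof (rule vecI)
  fix i
  have "z * c$i + x * a$i + y * b$i = 0" using comp[OF h, of i] by (simp add: algebra_simps)
  from solve2[OF z this] show "c$i = ((-x/z) *\<^sub>R a + (-y/z) *\<^sub>R b)$i" by simp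
qed

lemma dim3_aux: "c \<in> span {a,b} \<Longrightarrow> dim {a,b,c::real^4} \<le> 2"
proof -
  assume c: "c \<in> span {a,b}"
  have "{a,b,c} \<subseteq> span {a,b}" using c by (auto intro: span_base)
  then have "dim {a,b,c} \<le> card {a,b}" by (rule dim_le_card) simp
  also have "\<dots> \<le> 2" by (simp add: card_insert_le_m1)
  finally show ?thesis .
qed

lemma indep3_swap12: assumes "indep3 a b c" shows "indep3 b a c"
  unfolding indep3_def
proof (intro allI impI)
  fix x y z assume "x *\<^sub>R b + y *\<^sub>R a + z *\<^sub>R c = 0"
  then have "y *\<^sub>R a + x *\<^sub>R b + z *\<^sub>R c = 0" by (simp add: algebra_simps)
  then show "x = 0 \<and> y = 0 \<and> z = 0" using assms unfolding indep3_def by blast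
qed

lemma indep3_swap23: assumes "indep3 a b c" shows "indep3 a c b"
  unfolding indep3_def
proof (intro allI impI)
  fix x y z assume "x *\<^sub>R a + y *\<^sub>R c + z *\<^sub>R b = 0"
  then have "x *\<^sub>R a + z *\<^sub>R b + y *\<^sub>R c = 0" by (simp add: algebra_simps)
  then show "x = 0 \<and> y = 0 \<and> z = 0" using assms unfolding indep3_def by blast
qed

lemma indep3_neq: assumes "indep3 a b c" shows "a \<noteq> b"
proof
  assume "a = b"
  then have "1 *\<^sub>R a + (-1) *\<^sub>R b + 0 *\<^sub>R c = 0" by simp
  from assms[unfolded indep3_def, rule_format, OF this] show False by simp
qed

lemma dim3: "dim {a,b,c::real^4} \<le> 2 \<longleftrightarrow> \<not> indep3 a b c"
proof
  assume d: "dim {a,b,c} \<le> 2"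
  show "\<not> indep3 a b c"
  proof
    assume i: "indep3 a b c"
    have ab: "a \<noteq> b" using indep3_neq[OF i] .
    have ac: "a \<noteq> c" using indep3_neq[OF indep3_swap23[OF i]] .
    have bc: "b \<noteq> c" using indep3_neq[OF indep3_swap23[OF indep3_swap12[OF i]]] .
    have "independent {a,b,c}"
      unfolding independent_explicit
    proof (intro conjI allI impI ballI)
      fix f v assume s: "(\<Sum>v\<in>{a,b,c}. f v *\<^sub>R v) = 0" and v: "v \<in> {a,b,c}"
      have "f a *\<^sub>R a + f b *\<^sub>R b + f c *\<^sub>R c = 0" using s ab ac bc by (simp add: add.assoc)
      then have "f a = 0 \<and> f b = 0 \<and> f c = 0" using i unfolding indep3_def by blast
      then show "f v = 0" using v by auto
    qed simp
    then have "dim {a,b,c} = card {a,b,c}" by (rule dim_eq_card_independent)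
    also have "\<dots> = 3" using ab ac bc by simp
    finally show False using d by simp
  qed
next
  assume "\<not> indep3 a b c"
  then obtain x y z where r: "x *\<^sub>R a + y *\<^sub>R b + z *\<^sub>R c = 0" and nz: "x \<noteq> 0 \<or> y \<noteq> 0 \<or> z \<noteq> 0"
    unfolding indep3_def by blast
  show "dim {a,b,c} \<le> 2"
  proof (cases "z = 0")
    case False
    have "c = (-x/z) *\<^sub>R a + (-y/z) *\<^sub>R b" using solve_vec[OF r False] .
    then have "c \<in> span {a,b}" unfolding in_span2 by blast
    then show ?thesis by (rule dim3_aux)
  next
    case z: True
    show ?thesis
    proof (cases "y = 0")
      case False
      have "x *\<^sub>R a + 0 *\<^sub>R c + y *\<^sub>R b = 0" using r z by simp
      then have "b = (-x/y) *\<^sub>R a + (-0/y) *\<^sub>R c" using solve_vec False by blast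
      then have "b \<in> span {a,c}" unfolding in_span2 by blast
      then have "dim {a,c,b} \<le> 2" by (rule dim3_aux)
      then show ?thesis by (simp add: insert_commute)
    next
      case y: True
      with nz z have x: "x \<noteq> 0" by simp
      have "a = 0" using r y z x by simp
      then have "a \<in> span {b,c}" by (simp add: span_zero)
      then have "dim {b,c,a} \<le> 2" by (rule dim3_aux)
      then show ?thesis by (simp add: insert_commute)
    qed
  qed
qed

lemma dim_three: "dim (span {a} \<union> span {b} \<union> span {c}) = dim {a,b,c}"
proof -
  have "dim (span {a} \<union> span {b} \<union> span {c}) = dim (span (span {a} \<union> span {b} \<union> span {c}))"
    by (simp only: dim_span)
  also have "\<dots> = dim (span {a,b,c})" by (simp only: span_three)
  also have "\<dots> = dim {a,b,c}" by (simp only: dim_span)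
  finally show ?thesis .
qed

lemma collinear_pt: "a \<noteq> 0 \<Longrightarrow> b \<noteq> 0 \<Longrightarrow> c \<noteq> 0 \<Longrightarrow>
   proj_collinear (pt a) (pt b) (pt c) \<longleftrightarrow> \<not> indep3 a b c"
  unfolding proj_collinear_def by (simp add: Rep_pt dim_three dim3)

lemma on_line_pt: "z \<noteq> 0 \<Longrightarrow> a \<noteq> 0 \<Longrightarrow> b \<noteq> 0 \<Longrightarrow>
   on_line (pt z) (pt a) (pt b) \<longleftrightarrow> (\<exists>s t. z = s *\<^sub>R a + t *\<^sub>R b)"
  unfolding on_line_def by (simp add: Rep_pt span_two span_single_sub in_span2)

lemma shift_exists:
  assumes nz: "a \<noteq> 0" "b \<noteq> 0" "z \<noteq> 0"
    and ne: "pt a \<noteq> pt b" "pt z \<noteq> pt a" "pt z \<noteq> pt b"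
    and dep: "\<not> indep3 a b z"
  shows "\<exists>v. v \<noteq> 0 \<and> pt v = pt a \<and> v + z \<noteq> 0 \<and> pt (v + z) = pt b"
proof -
  obtain x y w where r: "x *\<^sub>R a + y *\<^sub>R b + w *\<^sub>R z = 0" and nt: "x \<noteq> 0 \<or> y \<noteq> 0 \<or> w \<noteq> 0"
    using dep unfolding indep3_def by blast
  have c: "x * a$i + y * b$i + w * z$i = 0" for i using comp[OF r, of i] by simp
  have w: "w \<noteq> 0"
  proof
    assume w0: "w = 0"
    show False
    proof (cases "x = 0")
      case True
      then have y: "y \<noteq> 0" using nt w0 by simp
      have "b = 0"
      proof (rule vecI)
        fix i have "y * b$i = 0" using c[of i] True w0 by simp
        then show "b$i = (0::real^4)$i" using y by simp
      qed
      then show False using nz by simp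
    next
      case False
      have "a = (-y/x) *\<^sub>R b"
      proof (rule vecI)
        fix i have "x * a$i + y * b$i = 0" using c[of i] w0 by simp
        from solve1[OF False this] show "a$i = ((-y/x) *\<^sub>R b)$i" by simp
      qed
      then show False using ne nz pt_eq by blast
    qed
  qed
  have x: "x \<noteq> 0"
  proof
    assume x0: "x = 0"
    have "z = (-y/w) *\<^sub>R b"
    proof (rule vecI)
      fix i have "w * z$i + y * b$i = 0" using c[of i] x0 by simp
      from solve1[OF w this] show "z$i = ((-y/w) *\<^sub>R b)$i" by simp
    qed
    then show False using ne nz pt_eq by blast
  qed
  have y: "y \<noteq> 0"
  proof
    assume y0: "y = 0"
    have "z = (-x/w) *\<^sub>R a"
    proof (rule vecI)
      fix i have "w * z$i + x * a$i = 0" using c[of i] y0 by simp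
      from solve1[OF w this] show "z$i = ((-x/w) *\<^sub>R a)$i" by simp
    qed
    then show False using ne nz pt_eq by blast
  qed
  have e: "(x/w) *\<^sub>R a + z = (-y/w) *\<^sub>R b"
  proof (rule vecI)
    fix i have "w * z$i + x * a$i + y * b$i = 0" using c[of i] by linarith
    from solve2[OF w this] have zi: "z$i = (-x/w) * a$i + (-y/w) * b$i" .
    show "((x/w) *\<^sub>R a + z)$i = ((-y/w) *\<^sub>R b)$i" by (simp add: zi)
  qed
  show ?thesis
  proof (intro exI conjI)
    show "(x/w) *\<^sub>R a \<noteq> 0" using x w nz by simp
    show "pt ((x/w) *\<^sub>R a) = pt a" using x w by (simp add: pt_scale)
    show "(x/w) *\<^sub>R a + z \<noteq> 0" unfolding e using y w nz by simp
    show "pt ((x/w) *\<^sub>R a + z) = pt b" unfolding e using y w pt_scale[of "-y/w" b] by simp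
  qed
qed

lemma shift_unique:
  assumes "v \<noteq> 0" "v' \<noteq> 0" "pt v = pt v'" "v + z \<noteq> 0" "v' + z \<noteq> 0" "pt (v + z) = pt (v' + z)"
    "z \<noteq> 0" "pt z \<noteq> pt v"
  shows "v = v'"
proof -
  obtain c where c: "v = c *\<^sub>R v'" using assms pt_eq by blast
  obtain d where d: "v + z = d *\<^sub>R (v' + z)" using assms pt_eq by blast
  have e: "c * v'$i + z$i = d * v'$i + d * z$i" for i
    using comp[OF d, of i] c by (simp add: algebra_simps)
  have d1: "d = 1"
  proof (rule ccontr)
    assume d1: "d \<noteq> 1"
    then have d1': "d - 1 \<noteq> 0" by simp
    have "z = (-(d - c)/(d - 1)) *\<^sub>R v'"
    proof (rule vecI)
      fix i have "(d - 1) * z$i + (d - c) * v'$i = 0" using e[of i] by (simp add: algebra_simps)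
      from solve1[OF d1' this] show "z$i = ((-(d - c)/(d - 1)) *\<^sub>R v')$i" by simp
    qed
    then have "pt z = pt v'" using pt_eq[of z v'] assms by blast
    then show False using assms by simp
  qed
  have "c = 1"
  proof (rule ccontr)
    assume c1: "c \<noteq> 1"
    have "(c - 1) *\<^sub>R v' = 0"
    proof (rule vecI)
      fix i show "((c - 1) *\<^sub>R v')$i = (0::real^4)$i" using e[of i] d1 by (simp add: algebra_simps)
    qed
    then show False using c1 assms by simp
  qed
  then show ?thesis using c by simp
qed

lemma meet_unique:
  assumes i: "indep3 a b c"
    and u1: "u = \<alpha> *\<^sub>R a + \<beta> *\<^sub>R b" and u2: "u = \<gamma> *\<^sub>R c + \<delta> *\<^sub>R e"
    and z1: "z = \<alpha>' *\<^sub>R a + \<beta>' *\<^sub>R b" and z2: "z = \<gamma>' *\<^sub>R c + \<delta>' *\<^sub>R e"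
    and z: "z \<noteq> 0"
  shows "u = (\<delta>/\<delta>') *\<^sub>R z"
proof -
  have R: "(\<delta>'*\<alpha> - \<delta>*\<alpha>') *\<^sub>R a + (\<delta>'*\<beta> - \<delta>*\<beta>') *\<^sub>R b + (-(\<delta>'*\<gamma> - \<delta>*\<gamma>')) *\<^sub>R c = 0"
  proof (rule vecI)
    fix i
    have h1: "\<alpha> * a$i + \<beta> * b$i = \<gamma> * c$i + \<delta> * e$i" using comp[OF u1, of i] comp[OF u2, of i] by simp
    have h2: "\<alpha>' * a$i + \<beta>' * b$i = \<gamma>' * c$i + \<delta>' * e$i" using comp[OF z1, of i] comp[OF z2, of i] by simp
    have "\<delta>' * (\<alpha> * a$i + \<beta> * b$i) - \<delta> * (\<alpha>' * a$i + \<beta>' * b$i) = \<delta>' * (\<gamma> * c$i + \<delta> * e$i) - \<delta> * (\<gamma>' * c$i + \<delta>' * e$i)"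
      using h1 h2 by simp
    then show "((\<delta>'*\<alpha> - \<delta>*\<alpha>') *\<^sub>R a + (\<delta>'*\<beta> - \<delta>*\<beta>') *\<^sub>R b + (-(\<delta>'*\<gamma> - \<delta>*\<gamma>')) *\<^sub>R c)$i = (0::real^4)$i"
      by (simp add: algebra_simps)
  qed
  have k0: "\<delta>'*\<alpha> - \<delta>*\<alpha>' = 0 \<and> \<delta>'*\<beta> - \<delta>*\<beta>' = 0"
    using i R unfolding indep3_def by blast
  have d: "\<delta>' \<noteq> 0"
  proof
    assume d0: "\<delta>' = 0"
    have "\<alpha>' *\<^sub>R a + \<beta>' *\<^sub>R b + (-\<gamma>') *\<^sub>R c = 0" using z1 z2 d0 by simp
    then have "\<alpha>' = 0 \<and> \<beta>' = 0" using i unfolding indep3_def by blast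
    then show False using z z1 by simp
  qed
  have ka: "\<alpha> = (\<delta>/\<delta>') * \<alpha>'"
  proof -
    have "\<alpha> = (\<delta>'*\<alpha>)/\<delta>'" using d by simp
    also have "\<dots> = (\<delta>*\<alpha>')/\<delta>'" using k0 by simp
    finally show ?thesis by simp
  qed
  have kb: "\<beta> = (\<delta>/\<delta>') * \<beta>'"
  proof -
    have "\<beta> = (\<delta>'*\<beta>)/\<delta>'" using d by simp
    also have "\<dots> = (\<delta>*\<beta>')/\<delta>'" using k0 by simp
    finally show ?thesis by simp
  qed
  show ?thesis unfolding u1 z1 using ka kb by (simp add: scaleR_add_right)
qed

definition L :: "rp3 \<Rightarrow> real^4" where "L x = (SOME v. v \<noteq> 0 \<and> x = pt v)"

lemma L: "L x \<noteq> 0" "pt (L x) = x"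
  using someI_ex[OF rp3_lift[of x]] unfolding L_def by auto

theorem lemma4p3:
  fixes x00 x10 x11 x01 y1 y2 :: rp3
    and p0 p1 q0 q1 :: "real \<Rightarrow> rp3"
  assumes planar: "proj_coplanar x00 x10 x11 x01"
    and gp_quad: "\<not> proj_collinear x00 x10 x11" "\<not> proj_collinear x10 x11 x01"
                 "\<not> proj_collinear x11 x01 x00" "\<not> proj_collinear x01 x00 x10"
    and y1: "on_line y1 x00 x10" "on_line y1 x01 x11"
    and y2: "on_line y2 x00 x01" "on_line y2 x10 x11"
    and ends: "p0 0 = x00" "p0 1 = x10" "p1 0 = x01" "p1 1 = x11"
              "q0 0 = x00" "q0 1 = x01" "q1 0 = x10" "q1 1 = x11"
    and persp_p: "\<forall>u\<in>{0..1}. proj_collinear (p0 u) (p1 u) y2"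
    and persp_q: "\<forall>v\<in>{0..1}. proj_collinear (q0 v) (q1 v) y1"
    and gp_p: "\<forall>u\<in>{0..1}. p0 u \<noteq> p1 u \<and> p0 u \<noteq> y2 \<and> p1 u \<noteq> y2"
    and gp_q: "\<forall>v\<in>{0..1}. q0 v \<noteq> q1 v \<and> q0 v \<noteq> y1 \<and> q1 v \<noteq> y1"
    and gp_nondeg: "\<forall>u\<in>{0..1}. \<forall>v\<in>{0..1}.
                      \<not> (on_line (q0 v) x00 (p0 u) \<and> on_line (q0 v) x01 (p1 u))"
  shows "\<exists>f. proj_translation_patch f \<and> adapted f x00 x10 x11 x01 \<and>
             (\<forall>u\<in>{0..1}. f u 0 = p0 u \<and> f u 1 = p1 u) \<and>
             (\<forall>v\<in>{0..1}. f 0 v = q0 v \<and> f 1 v = q1 v) \<and>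
             (\<forall>g. proj_translation_patch g \<and> adapted g x00 x10 x11 x01 \<and>
                  (\<forall>u\<in>{0..1}. g u 0 = p0 u \<and> g u 1 = p1 u) \<and>
                  (\<forall>v\<in>{0..1}. g 0 v = q0 v \<and> g 1 v = q1 v)
                  \<longrightarrow> (\<forall>u\<in>{0..1}. \<forall>v\<in>{0..1}. g u v = f u v))"
proof -
  obtain yv where yv: "yv \<noteq> 0" "y1 = pt yv" using rp3_lift by blast
  obtain zv where zv: "zv \<noteq> 0" "y2 = pt zv" using rp3_lift by blast
  define Pp where "Pp u v \<longleftrightarrow> v \<noteq> 0 \<and> pt v = p0 u \<and> v + zv \<noteq> 0 \<and> pt (v + zv) = p1 u" for u v
  define p where "p u = (SOME v. Pp u v)" for u
  have Pex: "\<exists>v. Pp u v" if u: "u \<in> {0..1}" for u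
  proof -
    have "\<not> indep3 (L (p0 u)) (L (p1 u)) zv"
      using persp_p u collinear_pt[of "L (p0 u)" "L (p1 u)" zv] L zv by auto
    moreover have g: "p0 u \<noteq> p1 u" "pt zv \<noteq> p0 u" "pt zv \<noteq> p1 u" using gp_p u zv by auto
    ultimately show ?thesis unfolding Pp_def
      using shift_exists[of "L (p0 u)" "L (p1 u)" zv] L zv by simp
  qed
  have P: "Pp u (p u)" if "u \<in> {0..1}" for u
    unfolding p_def using someI_ex[OF Pex[OF that]] .
  have Puniq: "v = p u" if u: "u \<in> {0..1}" and v: "Pp u v" for u v
  proof -
    have "pt zv \<noteq> p0 u" using gp_p u zv by auto
    then show ?thesis using shift_unique[of v "p u" zv] P[OF u] v zv unfolding Pp_def by auto
  qed
  have I01: "(0::real) \<in> {0..1}" "(1::real) \<in> {0..1}" by auto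
  have X: "x00 = pt (p 0)" "x10 = pt (p 1)" "x01 = pt (p 0 + zv)" "x11 = pt (p 1 + zv)"
    and Xnz: "p 0 \<noteq> 0" "p 1 \<noteq> 0" "p 0 + zv \<noteq> 0" "p 1 + zv \<noteq> 0"
    using P[OF I01(1)] P[OF I01(2)] ends unfolding Pp_def by auto
  have ind: "indep3 (p 0) (p 1) (p 0 + zv)"
    using gp_quad(4) collinear_pt[of "p 0 + zv" "p 0" "p 1"] X Xnz
    by (auto intro: indep3_swap12 indep3_swap23)
  obtain s t where st: "yv = s *\<^sub>R p 0 + t *\<^sub>R p 1"
    using y1(1) on_line_pt[of yv "p 0" "p 1"] X Xnz yv by auto
  obtain s' t' where st': "yv = s' *\<^sub>R (p 0 + zv) + t' *\<^sub>R (p 1 + zv)"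
    using y1(2) on_line_pt[of yv "p 0 + zv" "p 1 + zv"] X Xnz yv by auto
  define d where "d = p 1 - p 0"
  have "d = (1/t') *\<^sub>R yv"
    by (rule meet_unique[OF ind _ _ st st' yv(1), of _ "-1" 1 "-1"]) (simp_all add: d_def algebra_simps)
  moreover have dnz: "d \<noteq> 0" using indep3_neq[OF ind] by (simp add: d_def)
  ultimately have ptd: "pt d = y1" using yv by (simp add: pt_scale)
  define Qp where "Qp v t \<longleftrightarrow> p 0 + t \<noteq> 0 \<and> pt (p 0 + t) = q0 v \<and> p 1 + t \<noteq> 0 \<and> pt (p 1 + t) = q1 v" for v t
  define q where "q v = (SOME t. Qp v t)" for v
  have Qex: "\<exists>t. Qp v t" if v: "v \<in> {0..1}" for v
  proof -
    have "\<not> indep3 (L (q0 v)) (L (q1 v)) d"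
      using persp_q v collinear_pt[of "L (q0 v)" "L (q1 v)" d] L dnz ptd by auto
    moreover have g: "q0 v \<noteq> q1 v" "pt d \<noteq> q0 v" "pt d \<noteq> q1 v" using gp_q v ptd by auto
    ultimately obtain r where r: "r \<noteq> 0" "pt r = q0 v" "r + d \<noteq> 0" "pt (r + d) = q1 v"
      using shift_exists[of "L (q0 v)" "L (q1 v)" d] L dnz by auto
    have e: "p 1 + (r - p 0) = r + d" by (simp add: d_def algebra_simps)
    have "Qp v (r - p 0)" unfolding Qp_def e using r by simp
    then show ?thesis ..
  qed
  have Q: "Qp v (q v)" if "v \<in> {0..1}" for v
    unfolding q_def using someI_ex[OF Qex[OF that]] .
  have Quniq: "t = q v" if v: "v \<in> {0..1}" and t: "Qp v t" for v t
  proof -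
    have e: "p 0 + w + d = p 1 + w" for w by (simp add: d_def algebra_simps)
    have "p 0 + t = p 0 + q v"
    proof -
      have "pt d \<noteq> q0 v" using gp_q v ptd by auto
      then show ?thesis using shift_unique[of "p 0 + t" "p 0 + q v" d] Q[OF v] t dnz
        unfolding Qp_def e by auto
    qed
    then show ?thesis by simp
  qed
  have "Qp 0 0" unfolding Qp_def using X Xnz ends by simp
  then have q0: "q 0 = 0" using Quniq[OF I01(1)] by simp
  have "Qp 1 zv" unfolding Qp_def using X Xnz ends by simp
  then have q1: "q 1 = zv" using Quniq[OF I01(2)] by simp
  define f where "f u v = pt (p u + q v)" for u v
  have fb: "\<forall>u\<in>{0..1}. f u 0 = p0 u \<and> f u 1 = p1 u"
    using P q0 q1 unfolding f_def Pp_def by auto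
  have fb2: "\<forall>v\<in>{0..1}. f 0 v = q0 v \<and> f 1 v = q1 v"
    using Q unfolding f_def Qp_def by auto
  have nz: "p u + q v \<noteq> 0" if u: "u \<in> {0..1}" and v: "v \<in> {0..1}" for u v
  proof
    assume h: "p u + q v = 0"
    have Pu: "p u \<noteq> 0" "pt (p u) = p0 u" "p u + zv \<noteq> 0" "pt (p u + zv) = p1 u"
      using P[OF u] unfolding Pp_def by auto
    have Qv: "p 0 + q v \<noteq> 0" "pt (p 0 + q v) = q0 v" using Q[OF v] unfolding Qp_def by auto
    have qv: "q v = - p u" using h by (simp add: add_eq_0_iff)
    have "p 0 + q v = 1 *\<^sub>R p 0 + (-1) *\<^sub>R p u" by (simp add: qv)
    then have "on_line (pt (p 0 + q v)) (pt (p 0)) (pt (p u))"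
      using on_line_pt[of "p 0 + q v" "p 0" "p u"] Pu Qv Xnz by blast
    then have "on_line (q0 v) x00 (p0 u)" using Qv(2) X(1) Pu(2) by simp
    moreover have "on_line (q0 v) x01 (p1 u)"
    proof -
      have "p 0 + q v = 1 *\<^sub>R (p 0 + zv) + (-1) *\<^sub>R (p u + zv)" by (simp add: qv)
      then have "on_line (pt (p 0 + q v)) (pt (p 0 + zv)) (pt (p u + zv))"
        using on_line_pt[of "p 0 + q v" "p 0 + zv" "p u + zv"] Pu Qv Xnz by blast
      then show ?thesis using Qv(2) X(3) Pu(4) by simp
    qed
    ultimately show False using gp_nondeg u v by blast
  qed
  have pf: "proj_translation_patch f" unfolding proj_translation_patch_def f_def
    using nz by blast
  have af: "adapted f x00 x10 x11 x01" unfolding adapted_def using fb fb2 ends I01 by auto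
  have uniq: "\<forall>g. proj_translation_patch g \<and> adapted g x00 x10 x11 x01 \<and>
                  (\<forall>u\<in>{0..1}. g u 0 = p0 u \<and> g u 1 = p1 u) \<and>
                  (\<forall>v\<in>{0..1}. g 0 v = q0 v \<and> g 1 v = q1 v)
                  \<longrightarrow> (\<forall>u\<in>{0..1}. \<forall>v\<in>{0..1}. g u v = f u v)"
  proof (intro allI impI ballI)
    fix g and u v :: real
    assume g: "proj_translation_patch g \<and> adapted g x00 x10 x11 x01 \<and>
                  (\<forall>u\<in>{0..1}. g u 0 = p0 u \<and> g u 1 = p1 u) \<and>
                  (\<forall>v\<in>{0..1}. g 0 v = q0 v \<and> g 1 v = q1 v)"
      and u: "u \<in> {0..1}" and v: "v \<in> {0..1}"
    obtain p' q' :: "real \<Rightarrow> real^4" where pq: "\<And>u v. u\<in>{0..1} \<Longrightarrow> v\<in>{0..1} \<Longrightarrow>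
        p' u + q' v \<noteq> 0 \<and> g u v = pt (p' u + q' v)"
      using g unfolding proj_translation_patch_def by blast
    define W where "W = q' 1 - q' 0"
    have gX: "x00 = pt (p' 0 + q' 0)" "x01 = pt (p' 0 + q' 1)" "x10 = pt (p' 1 + q' 0)" "x11 = pt (p' 1 + q' 1)"
      using g pq[OF I01(1) I01(1)] pq[OF I01(1) I01(2)] pq[OF I01(2) I01(1)] pq[OF I01(2) I01(2)]
      unfolding adapted_def by auto
    have gnz: "p' 0 + q' 0 \<noteq> 0" "p' 0 + q' 1 \<noteq> 0" "p' 1 + q' 0 \<noteq> 0" "p' 1 + q' 1 \<noteq> 0"
      using pq I01 by auto
    have gind: "indep3 (p' 0 + q' 0) (p' 0 + q' 1) (p' 1 + q' 0)"
      using gp_quad(4) collinear_pt[of "p' 0 + q' 1" "p' 0 + q' 0" "p' 1 + q' 0"] gX gnz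
      by (auto intro: indep3_swap12)
    obtain a b where ab: "zv = a *\<^sub>R (p' 0 + q' 0) + b *\<^sub>R (p' 0 + q' 1)"
      using y2(1) on_line_pt[of zv "p' 0 + q' 0" "p' 0 + q' 1"] gX gnz zv by auto
    obtain a' b' where ab': "zv = a' *\<^sub>R (p' 1 + q' 0) + b' *\<^sub>R (p' 1 + q' 1)"
      using y2(2) on_line_pt[of zv "p' 1 + q' 0" "p' 1 + q' 1"] gX gnz zv by auto
    have Wk: "W = (1/b') *\<^sub>R zv"
      by (rule meet_unique[OF gind _ _ ab ab' zv(1), of _ "-1" 1 "-1"]) (simp_all add: W_def algebra_simps)
    have Wnz: "W \<noteq> 0" using indep3_neq[OF gind] by (auto simp: W_def)
    define m where "m = b'"
    have m: "m \<noteq> 0" using Wk Wnz by (auto simp: m_def)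
    have mW: "m *\<^sub>R W = zv" using Wk m by (simp add: m_def)
    have pp: "p w = m *\<^sub>R (p' w + q' 0)" if w: "w \<in> {0..1}" for w
    proof -
      have e: "m *\<^sub>R (p' w + q' 0) + zv = m *\<^sub>R (p' w + q' 1)"
        unfolding mW[symmetric] W_def by (simp add: algebra_simps)
      have "Pp w (m *\<^sub>R (p' w + q' 0))" unfolding Pp_def e
        using pq[OF w I01(1)] pq[OF w I01(2)] g w m by (auto simp: pt_scale)
      then show ?thesis using Puniq[OF w] by simp
    qed
    have qq: "q w = m *\<^sub>R (q' w - q' 0)" if w: "w \<in> {0..1}" for w
    proof -
      have e0: "p 0 + m *\<^sub>R (q' w - q' 0) = m *\<^sub>R (p' 0 + q' w)"
        using pp[OF I01(1)] by (simp add: algebra_simps)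
      have e1: "p 1 + m *\<^sub>R (q' w - q' 0) = m *\<^sub>R (p' 1 + q' w)"
        using pp[OF I01(2)] by (simp add: algebra_simps)
      have "Qp w (m *\<^sub>R (q' w - q' 0))" unfolding Qp_def e0 e1
        using pq[OF I01(1) w] pq[OF I01(2) w] g w m by (auto simp: pt_scale)
      then show ?thesis using Quniq[OF w] by simp
    qed
    have "p u + q v = m *\<^sub>R (p' u + q' v)" using pp[OF u] qq[OF v] by (simp add: algebra_simps)
    then show "g u v = f u v" unfolding f_def using pq[OF u v] m by (simp add: pt_scale)
  qed
  show ?thesis using pf af fb fb2 uniq by blast
qed

end
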